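(* Let $m\ge n$, let $\bar A\in\mathbb R^{m\times n}$, $\bar{\mathbf b}\in\mathbb R^m$, $\bar{\mathbf c}\in\mathbb R^n$ with $\|\bar A\|,\|\bar{\mathbf b}\|,\|\bar{\mathbf c}\|\le1$, let $0<\sigma^2\le1$, and let $A,\mathbf b,\mathbf c$ be obtained by adding independent $N(0,\sigma^2)$ random variables to every entry of $\bar A,\bar{\mathbf b},\bar{\mathbf c}$. Let $\mathcal F$ be the event that the linear program $\max\mathbf c\mathbf x$ s.t. $A\mathbf x\le\mathbf b$, $\mathbf x\ge0$ is feasible and bounded. Then for every $\epsilon>0$, \[ \Pr\left[\beta_P(A,\mathbf b,\mathbf c)\le\frac{\epsilon}{\max(1,\|A\|\,\|\mathbf x^*\|)}\ \text{and}\ \mathcal F\right]\le\frac{4\epsilon m}{\sigma^2}. \]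
   Context: $\|\cdot\|$ is the Euclidean norm for vectors and the spectral norm for matrices. On $\mathcal F$, with probability one the primal program and its dual $\min\mathbf y\mathbf b$ s.t. $\mathbf yA\ge\mathbf c$, $\mathbf y\ge0$ have unique optimal solutions $\mathbf x^*$, $\mathbf y^*$. With $V=\{j:y^*_j>0\}$ and $\bar V$ its complement, $\beta_P(A,\mathbf b,\mathbf c)=\min_{j\in\bar V}(b_j-A_{j,:}\mathbf x^* )$. *)

theory Defs
  imports "HOL-Analysis.Analysis" "HOL-Probability.Probability"
begin

text \<open>Linear program  max c x  s.t.  A x <= b, x >= 0  and its dual
  min y b  s.t.  y A >= c, y >= 0.  Matrices are real^'n^'m (m rows, n columns).\<close>

definition primal_feasible :: "real^'n^'m \<Rightarrow> real^'m \<Rightarrow> real^'n \<Rightarrow> bool" where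
  "primal_feasible A b x \<longleftrightarrow> (\<forall>i. 0 \<le> x $ i) \<and> (\<forall>j. (A *v x) $ j \<le> b $ j)"

definition dual_feasible :: "real^'n^'m \<Rightarrow> real^'n \<Rightarrow> real^'m \<Rightarrow> bool" where
  "dual_feasible A c y \<longleftrightarrow> (\<forall>j. 0 \<le> y $ j) \<and> (\<forall>i. c $ i \<le> (y v* A) $ i)"

definition primal_optimal :: "real^'n^'m \<Rightarrow> real^'m \<Rightarrow> real^'n \<Rightarrow> real^'n \<Rightarrow> bool" where
  "primal_optimal A b c x \<longleftrightarrow> primal_feasible A b x \<and>
     (\<forall>x'. primal_feasible A b x' \<longrightarrow> c \<bullet> x' \<le> c \<bullet> x)"

definition dual_optimal :: "real^'n^'m \<Rightarrow> real^'m \<Rightarrow> real^'n \<Rightarrow> real^'m \<Rightarrow> bool" where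
  "dual_optimal A b c y \<longleftrightarrow> dual_feasible A c y \<and>
     (\<forall>y'. dual_feasible A c y' \<longrightarrow> y \<bullet> b \<le> y' \<bullet> b)"

definition lp_feasible_bounded :: "real^'n^'m \<Rightarrow> real^'m \<Rightarrow> real^'n \<Rightarrow> bool" where
  "lp_feasible_bounded A b c \<longleftrightarrow> (\<exists>x. primal_feasible A b x) \<and>
     (\<exists>M. \<forall>x. primal_feasible A b x \<longrightarrow> c \<bullet> x \<le> M)"

definition opt_x :: "real^'n^'m \<Rightarrow> real^'m \<Rightarrow> real^'n \<Rightarrow> real^'n" where
  "opt_x A b c = (THE x. primal_optimal A b c x)"

definition opt_y :: "real^'n^'m \<Rightarrow> real^'m \<Rightarrow> real^'n \<Rightarrow> real^'m" where
  "opt_y A b c = (THE y. dual_optimal A b c y)"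

text \<open>beta_P = min over j with y*_j = 0 of (b_j - A_j x*); min of the empty set is +infinity.\<close>
definition betaP :: "real^'n^'m \<Rightarrow> real^'m \<Rightarrow> real^'n \<Rightarrow> ereal" where
  "betaP A b c = (INF j \<in> {j. opt_y A b c $ j = 0}.
      ereal (b $ j - (A *v opt_x A b c) $ j))"

definition spec_norm :: "real^'n^'m \<Rightarrow> real" where
  "spec_norm A = onorm (\<lambda>x. A *v x)"

text \<open>Sample space: one real coordinate per entry of A, b, c.\<close>
type_synonym ('m,'n) lp_index = "('m \<times> 'n) + ('m + 'n)"

definition lp_mean :: "real^'n^'m \<Rightarrow> real^'m \<Rightarrow> real^'n \<Rightarrow> ('m,'n) lp_index \<Rightarrow> real" where
  "lp_mean A b c k = (case k of Inl (i, j) \<Rightarrow> A $ i $ j | Inr (Inl i) \<Rightarrow> b $ i | Inr (Inr j) \<Rightarrow> c $ j)"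

definition gauss_perturb ::
  "real^'n^'m \<Rightarrow> real^'m \<Rightarrow> real^'n \<Rightarrow> real \<Rightarrow> (('m,'n) lp_index \<Rightarrow> real) measure" where
  "gauss_perturb A b c \<sigma> =
     PiM UNIV (\<lambda>k. density lborel (normal_density (lp_mean A b c k) \<sigma>))"

definition rA :: "(('m,'n) lp_index \<Rightarrow> real) \<Rightarrow> real^'n^'m" where
  "rA \<omega> = (\<chi> i j. \<omega> (Inl (i, j)))"
definition rb :: "(('m,'n) lp_index \<Rightarrow> real) \<Rightarrow> real^'m" where
  "rb \<omega> = (\<chi> i. \<omega> (Inr (Inl i)))"
definition rc :: "(('m,'n) lp_index \<Rightarrow> real) \<Rightarrow> real^'n" where
  "rc \<omega> = (\<chi> j. \<omega> (Inr (Inr j)))"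

end

theory Submission imports Defs begin

lemma exists_small_pos:
  fixes P :: "'r::finite \<Rightarrow> real \<Rightarrow> bool"
  assumes "\<And>r. eventually (P r) (at_right 0)"
  shows "\<exists>\<delta>>0. \<forall>r. P r \<delta>"
proof -
  have "eventually (\<lambda>\<delta>. \<forall>r. P r \<delta>) (at_right (0::real))"
    using assms by (intro eventually_all_finite) auto
  moreover have "eventually (\<lambda>\<delta>. 0 < \<delta>) (at_right (0::real))"
    by (rule eventually_at_right_less)
  ultimately have "eventually (\<lambda>\<delta>. 0 < \<delta> \<and> (\<forall>r. P r \<delta>)) (at_right (0::real))"
    by (rule eventually_conj[rotated]) 
  then show ?thesis
    using eventually_happens[of _ "at_right (0::real)"] by auto
qed

lemma slack_eventually:
  fixes a b :: real
  assumes "a < h"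
  shows "eventually (\<lambda>\<delta>. a + \<delta> * b < h) (at_right 0)"
proof -
  have "((\<lambda>\<delta>. a + \<delta> * b) \<longlongrightarrow> a + 0 * b) (at_right 0)"
    by (intro tendsto_intros)
  then show ?thesis using assms order_tendstoD(2) by fastforce
qed

lemma strong_duality_G:
  fixes G :: "'r::finite \<Rightarrow> 'a::euclidean_space" and h :: "'r \<Rightarrow> real" and c x :: 'a
  assumes feas: "\<forall>r. G r \<bullet> x \<le> h r"
    and opt: "\<forall>x'. (\<forall>r. G r \<bullet> x' \<le> h r) \<longrightarrow> c \<bullet> x' \<le> c \<bullet> x"
  shows "\<exists>w. (\<forall>r. 0 \<le> w r) \<and> (\<Sum>r\<in>UNIV. w r *\<^sub>R G r) = c \<and> (\<Sum>r\<in>UNIV. w r * h r) = c \<bullet> x"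
proof -
  define T where "T = {r. G r \<bullet> x = h r}"
  define C where "C = convex_cone hull (G ` T)"
  have clC: "closed C" unfolding C_def
    by (rule closed_convex_cone_hull) simp
  have ccC: "convex_cone C" unfolding C_def
    by (rule convex_cone_convex_cone_hull)
  have GC: "G r \<in> C" if "r \<in> T" for r
    unfolding C_def using that by (simp add: hull_inc)
  have "c \<in> C"
  proof (rule ccontr)
    assume "c \<notin> C"
    from separating_hyperplane_closed_point[OF _ clC this] ccC
    obtain a bb where ab: "a \<bullet> c < bb" "\<forall>z\<in>C. bb < a \<bullet> z"
      by (auto simp: convex_cone_def)
    have "0 \<in> C" using ccC by (simp add: convex_cone_iff)
    with ab have bb0: "bb < 0" by auto
    have aG: "0 \<le> a \<bullet> G r" if "r \<in> T" for r
    proof (rule ccontr)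
      assume "\<not> 0 \<le> a \<bullet> G r"
      then have neg: "a \<bullet> G r < 0" by simp
      define t where "t = bb / (a \<bullet> G r)"
      have "0 \<le> t" unfolding t_def using neg bb0 by (simp add: divide_nonpos_neg)
      then have "t *\<^sub>R G r \<in> C" using GC[OF that] ccC by (simp add: convex_cone_scaleR)
      then have "bb < a \<bullet> (t *\<^sub>R G r)" using ab by auto
      also have "a \<bullet> (t *\<^sub>R G r) = bb" unfolding t_def using neg by simp
      finally show False by simp
    qed
    define d where "d = - a"
    have cd: "0 < c \<bullet> d" unfolding d_def using ab bb0 by (simp add: inner_commute)
    have "eventually (\<lambda>\<delta>. G r \<bullet> (x + \<delta> *\<^sub>R d) \<le> h r) (at_right 0)" for r
    proof (cases "r \<in> T")
      case True
      have "eventually (\<lambda>\<delta>. 0 < \<delta>) (at_right (0::real))" by (rule eventually_at_right_less)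
      then show ?thesis
      proof (rule eventually_mono)
        fix \<delta> :: real assume "0 < \<delta>"
        moreover have "G r \<bullet> d \<le> 0" using aG[OF True] unfolding d_def by (simp add: inner_commute)
        ultimately have "\<delta> * (G r \<bullet> d) \<le> 0" by (simp add: mult_nonneg_nonpos)
        moreover have "G r \<bullet> x \<le> h r" using feas by blast
        ultimately show "G r \<bullet> (x + \<delta> *\<^sub>R d) \<le> h r" by (simp add: inner_add_right)
      qed
    next
      case False
      then have "G r \<bullet> x < h r" using feas unfolding T_def by (simp add: order_less_le)
      from slack_eventually[OF this, of "G r \<bullet> d"]
      show ?thesis by (rule eventually_mono) (simp add: inner_add_right)
    qed
    from exists_small_pos[where P="\<lambda>r \<delta>. G r \<bullet> (x + \<delta> *\<^sub>R d) \<le> h r", OF this] obtain \<delta> :: real where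
      \<delta>: "0 < \<delta>" "\<forall>r. G r \<bullet> (x + \<delta> *\<^sub>R d) \<le> h r" by blast
    have "c \<bullet> (x + \<delta> *\<^sub>R d) \<le> c \<bullet> x" using opt \<delta> by blast
    moreover have "c \<bullet> (x + \<delta> *\<^sub>R d) = c \<bullet> x + \<delta> * (c \<bullet> d)" by (simp add: inner_add_right)
    moreover have "0 < \<delta> * (c \<bullet> d)" using \<delta> cd by simp
    ultimately show False by simp
  qed
  define C' where "C' = {(\<Sum>r\<in>UNIV. w r *\<^sub>R G r) | w. (\<forall>r. 0 \<le> w r) \<and> (\<forall>r. r \<notin> T \<longrightarrow> w r = 0)}"
  have "convex_cone C'"
    unfolding convex_cone_iff
  proof (intro conjI ballI allI impI)
    show "0 \<in> C'" unfolding C'_def by (rule CollectI, rule exI[of _ "\<lambda>_. 0"]) simp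
  next
    fix u v assume "u \<in> C'" "v \<in> C'"
    then obtain wu wv where "u = (\<Sum>r\<in>UNIV. wu r *\<^sub>R G r)" "\<forall>r. 0 \<le> wu r" "\<forall>r. r \<notin> T \<longrightarrow> wu r = 0"
      "v = (\<Sum>r\<in>UNIV. wv r *\<^sub>R G r)" "\<forall>r. 0 \<le> wv r" "\<forall>r. r \<notin> T \<longrightarrow> wv r = 0"
      unfolding C'_def by blast
    then show "u + v \<in> C'" unfolding C'_def
      by (intro CollectI exI[of _ "\<lambda>r. wu r + wv r"]) (auto simp: sum.distrib scaleR_add_left)
  next
    fix u and t :: real assume "u \<in> C'" "0 \<le> t"
    then obtain wu where "u = (\<Sum>r\<in>UNIV. wu r *\<^sub>R G r)" "\<forall>r. 0 \<le> wu r" "\<forall>r. r \<notin> T \<longrightarrow> wu r = 0"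
      unfolding C'_def by blast
    then show "t *\<^sub>R u \<in> C'" unfolding C'_def using \<open>0 \<le> t\<close>
      by (intro CollectI exI[of _ "\<lambda>r. t * wu r"]) (auto simp: scaleR_sum_right)
  qed
  moreover have "G ` T \<subseteq> C'"
  proof
    fix g assume "g \<in> G ` T"
    then obtain r0 where r0: "r0 \<in> T" "g = G r0" by blast
    have "(\<Sum>r\<in>UNIV. (if r = r0 then 1 else 0) *\<^sub>R G r) = G r0"
    proof -
      have "(\<Sum>r\<in>UNIV. (if r = r0 then 1 else 0) *\<^sub>R G r) = (\<Sum>r\<in>UNIV. if r = r0 then G r else 0)"
        by (rule sum.cong) auto
      then show ?thesis by simp
    qed
    then show "g \<in> C'" unfolding C'_def using r0
      by (intro CollectI exI[of _ "\<lambda>r. if r = r0 then 1 else 0"]) auto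
  qed
  ultimately have "C \<subseteq> C'" unfolding C_def by (rule hull_minimal[rotated])
  with \<open>c \<in> C\<close> obtain w where w: "c = (\<Sum>r\<in>UNIV. w r *\<^sub>R G r)" "\<forall>r. 0 \<le> w r" "\<forall>r. r \<notin> T \<longrightarrow> w r = 0"
    unfolding C'_def by blast
  have "(\<Sum>r\<in>UNIV. w r * h r) = (\<Sum>r\<in>UNIV. w r * (G r \<bullet> x))"
    using w(3) unfolding T_def by (intro sum.cong) auto
  also have "\<dots> = c \<bullet> x" unfolding w(1) by (simp add: inner_sum_left)
  finally show ?thesis using w by blast
qed

definition Gf :: "real^'n^'m \<Rightarrow> ('m + 'n) \<Rightarrow> real^'n" where
  "Gf A r = (case r of Inl k \<Rightarrow> A $ k | Inr i \<Rightarrow> - axis i 1)"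
definition hf :: "real^'m \<Rightarrow> ('m + 'n) \<Rightarrow> real" where
  "hf b r = (case r of Inl k \<Rightarrow> b $ k | Inr i \<Rightarrow> 0)"
definition wof :: "real^'n^'m \<Rightarrow> real^'n \<Rightarrow> real^'m \<Rightarrow> ('m + 'n) \<Rightarrow> real" where
  "wof A c y r = (case r of Inl k \<Rightarrow> y $ k | Inr i \<Rightarrow> (y v* A) $ i - c $ i)"

lemma sum_UNIV_Plus:
  fixes f :: "('a::finite + 'b::finite) \<Rightarrow> 'c::comm_monoid_add"
  shows "(\<Sum>r\<in>UNIV. f r) = (\<Sum>k\<in>UNIV. f (Inl k)) + (\<Sum>i\<in>UNIV. f (Inr i))"
  using sum.Plus[of "UNIV::'a set" "UNIV::'b set" f] by (simp add: comp_def)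

lemma mv_nth: "(A *v x) $ k = A $ k \<bullet> (x::real^'n::finite)"
  by (simp add: matrix_vector_mult_def inner_vec_def mult.commute)

lemma vm_nth: "(y v* A) $ i = (\<Sum>k\<in>UNIV. y $ k * A $ k $ i)"
  by (simp add: vector_matrix_mult_def)

lemma Gf_inner_Inl [simp]: "Gf A (Inl k) \<bullet> x = (A *v x) $ k"
  by (simp add: Gf_def mv_nth)
lemma Gf_inner_Inr [simp]: "Gf A (Inr i) \<bullet> x = - (x $ i)"
  by (simp add: Gf_def cart_eq_inner_axis inner_commute)
lemma hf_simps [simp]: "hf b (Inl k) = b $ k" "hf b (Inr i) = 0"
  by (simp_all add: hf_def)
lemma wof_simps [simp]: "wof A c y (Inl k) = y $ k" "wof A c y (Inr i) = (y v* A) $ i - c $ i"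
  by (simp_all add: wof_def)

lemma primal_feasible_G:
  "primal_feasible A b x \<longleftrightarrow> (\<forall>r. Gf A r \<bullet> x \<le> hf b r)"
  unfolding primal_feasible_def
  by (metis (no_types, lifting) Gf_inner_Inl Gf_inner_Inr hf_simps neg_le_0_iff_le sum.exhaust_sel sum.disc(1,2) sum.sel(1,2) isl_def)

lemma dual_feasible_wof:
  "dual_feasible A c y \<longleftrightarrow> (\<forall>r. 0 \<le> wof A c y r)"
  unfolding dual_feasible_def
  by (metis (no_types, lifting) diff_ge_0_iff_ge wof_simps sum.exhaust)

lemma wof_sum_G: "(\<Sum>r\<in>UNIV. wof A c y r *\<^sub>R Gf A r) = c"
proof -
  have "(\<Sum>r\<in>UNIV. wof A c y r *\<^sub>R Gf A r) $ i = c $ i" for i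
  proof -
    have "(\<Sum>r\<in>UNIV. wof A c y r *\<^sub>R Gf A r) $ i
        = (\<Sum>k\<in>UNIV. y $ k * A $ k $ i) - (\<Sum>l\<in>UNIV. ((y v* A) $ l - c $ l) * axis l 1 $ i)"
      by (simp add: sum_UNIV_Plus Gf_def sum_subtractf sum_negf)
    also have "(\<Sum>l\<in>UNIV. ((y v* A) $ l - c $ l) * axis l (1::real) $ i) = (y v* A) $ i - c $ i"
      by (simp add: axis_def if_distrib[of "\<lambda>t. _ * t"] cong: if_cong)
    finally show ?thesis by (simp add: vm_nth)
  qed
  then show ?thesis by (simp add: vec_eq_iff)
qed

lemma wof_sum_h: "(\<Sum>r\<in>UNIV. wof A c y r * hf b r) = y \<bullet> b"
  by (simp add: sum_UNIV_Plus inner_vec_def)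

lemma wof_sum_inner: "(\<Sum>r\<in>UNIV. wof A c y r * (Gf A r \<bullet> d)) = c \<bullet> d"
proof -
  have "c \<bullet> d = (\<Sum>r\<in>UNIV. wof A c y r *\<^sub>R Gf A r) \<bullet> d" by (simp add: wof_sum_G)
  also have "\<dots> = (\<Sum>r\<in>UNIV. wof A c y r * (Gf A r \<bullet> d))" by (simp add: inner_sum_left)
  finally show ?thesis by simp
qed

lemma weak_duality:
  assumes "primal_feasible A b x" "dual_feasible A c y"
  shows "c \<bullet> x \<le> y \<bullet> b"
proof -
  have "c \<bullet> x = (\<Sum>r\<in>UNIV. wof A c y r * (Gf A r \<bullet> x))" by (simp add: wof_sum_inner)
  also have "\<dots> \<le> (\<Sum>r\<in>UNIV. wof A c y r * hf b r)"
    using assms by (intro sum_mono mult_left_mono) (auto simp: primal_feasible_G dual_feasible_wof)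
  also have "\<dots> = y \<bullet> b" by (rule wof_sum_h)
  finally show ?thesis .
qed

lemma G_dual_to_y:
  fixes A :: "real^'n::finite^'m::finite"
  assumes w0: "\<forall>r. 0 \<le> w r" and wG: "(\<Sum>r\<in>UNIV. w r *\<^sub>R Gf A r) = c"
  defines "y \<equiv> (\<chi> k. w (Inl k))"
  shows "\<forall>r. w r = wof A c y r" "dual_feasible A c y" "(\<Sum>r\<in>UNIV. w r * hf b r) = y \<bullet> b"
proof -
  have wI: "w (Inr i) = (y v* A) $ i - c $ i" for i
  proof -
    have "c $ i = (\<Sum>r\<in>UNIV. w r *\<^sub>R Gf A r) $ i" using wG by simp
    also have "\<dots> = (\<Sum>k\<in>UNIV. w (Inl k) * A $ k $ i) - (\<Sum>l\<in>UNIV. w (Inr l) * axis l 1 $ i)"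
      by (simp add: sum_UNIV_Plus Gf_def sum_subtractf sum_negf)
    also have "(\<Sum>l\<in>UNIV. w (Inr l) * axis l (1::real) $ i) = w (Inr i)"
      by (simp add: axis_def if_distrib[of "\<lambda>t. _ * t"] cong: if_cong)
    finally show ?thesis by (simp add: vm_nth y_def)
  qed
  show ww: "\<forall>r. w r = wof A c y r"
    by (metis (no_types, lifting) sum.exhaust vec_lambda_beta wI wof_simps y_def)
  show "dual_feasible A c y" using ww w0 by (simp add: dual_feasible_wof)
  show "(\<Sum>r\<in>UNIV. w r * hf b r) = y \<bullet> b" using ww wof_sum_h by (metis (no_types, lifting) sum.cong)
qed

definition phi :: "real^'n^'m \<Rightarrow> real^'n \<Rightarrow> real^'m \<Rightarrow> real^'n \<Rightarrow> real" where
  "phi A c y d = (\<Sum>r\<in>UNIV. wof A c y r * \<bar>Gf A r \<bullet> d\<bar>)"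

lemma sum_UNIV_option:
  fixes f :: "'a::finite option \<Rightarrow> 'c::comm_monoid_add"
  shows "(\<Sum>s\<in>UNIV. f s) = f None + (\<Sum>k\<in>UNIV. f (Some k))"
proof -
  have "(UNIV :: 'a option set) = insert None (Some ` UNIV)" by (rule UNIV_option_conv)
  then have "(\<Sum>s\<in>UNIV. f s) = (\<Sum>s\<in>insert None (Some ` UNIV). f s)" by simp
  also have "\<dots> = f None + (\<Sum>s\<in>Some ` UNIV. f s)" by (subst sum.insert) auto
  also have "(\<Sum>s\<in>Some ` UNIV. f s) = (\<Sum>k\<in>UNIV. f (Some k))" by (subst sum.reindex) auto
  finally show ?thesis .
qed

lemma lp_duality_value:
  fixes A :: "real^'n::finite^'m::finite"
  assumes xo: "primal_optimal A b c x" and yo: "dual_optimal A b c y"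
  shows "y \<bullet> b = c \<bullet> x"
proof -
  have feas: "\<forall>r. Gf A r \<bullet> x \<le> hf b r" using xo by (simp add: primal_optimal_def primal_feasible_G)
  have opt: "\<forall>x'. (\<forall>r. Gf A r \<bullet> x' \<le> hf b r) \<longrightarrow> c \<bullet> x' \<le> c \<bullet> x"
    using xo by (simp add: primal_optimal_def primal_feasible_G)
  obtain w where w: "\<forall>r. 0 \<le> w r" "(\<Sum>r\<in>UNIV. w r *\<^sub>R Gf A r) = c" "(\<Sum>r\<in>UNIV. w r * hf b r) = c \<bullet> x"
    using strong_duality_G[OF feas opt] by blast
  note G = G_dual_to_y(1,2)[OF w(1,2)] G_dual_to_y(3)[OF w(1,2), where b=b]
  have "y \<bullet> b \<le> (\<chi> k. w (Inl k)) \<bullet> b" using yo G(2) by (simp add: dual_optimal_def)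
  also have "\<dots> = c \<bullet> x" using G(3) w(3) by simp
  finally have "y \<bullet> b \<le> c \<bullet> x" .
  moreover have "c \<bullet> x \<le> y \<bullet> b" using xo yo weak_duality[of A b x c y]
    unfolding primal_optimal_def dual_optimal_def by blast
  ultimately show ?thesis by simp
qed

lemma strict_compl:
  fixes A :: "real^'n::finite^'m::finite"
  assumes xo: "primal_optimal A b c x" and xu: "\<And>x'. primal_optimal A b c x' \<Longrightarrow> x' = x"
    and yo: "dual_optimal A b c y" and yu: "\<And>y'. dual_optimal A b c y' \<Longrightarrow> y' = y"
  shows "0 < wof A c y r \<or> Gf A r \<bullet> x < hf b r"
proof (rule ccontr)
  assume "\<not> (0 < wof A c y r \<or> Gf A r \<bullet> x < hf b r)"
  moreover have "0 \<le> wof A c y r" using yo by (simp add: dual_optimal_def dual_feasible_wof)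
  moreover have "Gf A r \<bullet> x \<le> hf b r" using xo by (simp add: primal_optimal_def primal_feasible_G)
  ultimately have wr: "wof A c y r = 0" and tight: "Gf A r \<bullet> x = hf b r" by auto
  have V: "y \<bullet> b = c \<bullet> x" by (rule lp_duality_value[OF xo yo])
  define G2 :: "('m + 'n) option \<Rightarrow> real^'n" where "G2 s = (case s of None \<Rightarrow> - c | Some s' \<Rightarrow> Gf A s')" for s
  define h2 :: "('m + 'n) option \<Rightarrow> real" where "h2 s = (case s of None \<Rightarrow> - (c \<bullet> x) | Some s' \<Rightarrow> hf b s')" for s
  have f2: "\<forall>s. G2 s \<bullet> x \<le> h2 s"
    using xo by (auto simp: G2_def h2_def primal_optimal_def primal_feasible_G split: option.split)
  have uniq2: "x' = x" if "\<forall>s. G2 s \<bullet> x' \<le> h2 s" for x'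
  proof -
    have pf: "primal_feasible A b x'" using that[rule_format, of "Some _"]
      by (simp add: G2_def h2_def primal_feasible_G)
    have "c \<bullet> x \<le> c \<bullet> x'" using that[rule_format, of None] by (simp add: G2_def h2_def)
    then have "primal_optimal A b c x'" using pf xo by (force simp: primal_optimal_def)
    then show ?thesis by (rule xu)
  qed
  have o2: "\<forall>x'. (\<forall>s. G2 s \<bullet> x' \<le> h2 s) \<longrightarrow> (- Gf A r) \<bullet> x' \<le> (- Gf A r) \<bullet> x"
    using uniq2 by auto
  obtain w2 where w2: "\<forall>s. 0 \<le> w2 s" "(\<Sum>s\<in>UNIV. w2 s *\<^sub>R G2 s) = - Gf A r"
      "(\<Sum>s\<in>UNIV. w2 s * h2 s) = (- Gf A r) \<bullet> x"
    using strong_duality_G[OF f2 o2] by blast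
  define lam where "lam = w2 None"
  define w' where "w' s = w2 (Some s) + (if s = r then 1 else 0)" for s
  have w'0: "\<forall>s. 0 \<le> w' s" using w2(1) by (simp add: w'_def)
  have sum_ind: "(\<Sum>s\<in>UNIV. (if s = r then 1 else 0) *\<^sub>R Gf A s) = Gf A r"
  proof -
    have "(\<Sum>s\<in>UNIV. (if s = r then 1 else 0) *\<^sub>R Gf A s) = (\<Sum>s\<in>UNIV. if s = r then Gf A s else 0)"
      by (rule sum.cong) auto
    then show ?thesis by simp
  qed
  have sum_ind2: "(\<Sum>s\<in>UNIV. w2 (Some s) * hf b s + (if s = r then 1 else 0) * hf b s)
      = (\<Sum>s\<in>UNIV. w2 (Some s) * hf b s) + hf b r"
  proof -
    have "(\<Sum>s\<in>UNIV. (if s = r then 1 else 0) * hf b s) = (\<Sum>s\<in>UNIV. if s = r then hf b s else 0)"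
      by (rule sum.cong) auto
    then show ?thesis by (simp add: sum.distrib)
  qed
  have E1: "(\<Sum>s\<in>UNIV. w' s *\<^sub>R Gf A s) = lam *\<^sub>R c"
  proof -
    have "- Gf A r = - (lam *\<^sub>R c) + (\<Sum>s\<in>UNIV. w2 (Some s) *\<^sub>R Gf A s)"
      using w2(2) by (simp add: sum_UNIV_option G2_def lam_def)
    then have "(\<Sum>s\<in>UNIV. w2 (Some s) *\<^sub>R Gf A s) + Gf A r = lam *\<^sub>R c"
      by (simp add: algebra_simps)
    then show ?thesis
      by (simp add: w'_def scaleR_add_left sum.distrib sum_ind)
  qed
  have E2: "(\<Sum>s\<in>UNIV. w' s * hf b s) = lam * (c \<bullet> x)"
  proof -
    have "- (Gf A r \<bullet> x) = - (lam * (c \<bullet> x)) + (\<Sum>s\<in>UNIV. w2 (Some s) * hf b s)"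
      using w2(3) by (simp add: sum_UNIV_option h2_def lam_def)
    then show ?thesis using tight
      by (simp add: w'_def distrib_right sum_ind2)
  qed
  have key: "wn r = 0" if wn0: "\<forall>s. 0 \<le> wn s" and wnG: "(\<Sum>s\<in>UNIV. wn s *\<^sub>R Gf A s) = c"
    and wnh: "(\<Sum>s\<in>UNIV. wn s * hf b s) = c \<bullet> x" for wn
  proof -
    note G = G_dual_to_y(1,2)[OF wn0 wnG] G_dual_to_y(3)[OF wn0 wnG, where b=b]
    define y' where "y' = (\<chi> k. wn (Inl k))"
    have "dual_optimal A b c y'"
      unfolding dual_optimal_def
    proof (intro conjI allI impI)
      show "dual_feasible A c y'" using G(2) by (simp add: y'_def)
      fix y'' assume "dual_feasible A c y''"
      then have "c \<bullet> x \<le> y'' \<bullet> b" using xo weak_duality[of A b x c y''] unfolding primal_optimal_def by blast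
      then show "y' \<bullet> b \<le> y'' \<bullet> b" using G(3) wnh by (simp add: y'_def)
    qed
    then have "y' = y" by (rule yu)
    moreover have "wn r = wof A c y' r" using G(1) unfolding y'_def by blast
    ultimately show ?thesis using wr by simp
  qed
  have "lam \<ge> 0" using w2(1) by (simp add: lam_def)
  show False
  proof (cases "lam > 0")
    case True
    define wn where "wn s = w' s / lam" for s
    have "wn r = 0"
    proof (rule key)
      show "\<forall>s. 0 \<le> wn s" using w'0 True by (simp add: wn_def)
      show "(\<Sum>s\<in>UNIV. wn s *\<^sub>R Gf A s) = c"
      proof -
        have "(\<Sum>s\<in>UNIV. wn s *\<^sub>R Gf A s) = (1 / lam) *\<^sub>R (\<Sum>s\<in>UNIV. w' s *\<^sub>R Gf A s)"
          by (simp add: wn_def scaleR_sum_right)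
        then show ?thesis using E1 True by simp
      qed
      show "(\<Sum>s\<in>UNIV. wn s * hf b s) = c \<bullet> x"
      proof -
        have "(\<Sum>s\<in>UNIV. wn s * hf b s) = (\<Sum>s\<in>UNIV. w' s * hf b s) / lam"
          by (simp add: wn_def sum_divide_distrib)
        then show ?thesis using E2 True by simp
      qed
    qed
    moreover have "wn r > 0" using True w2(1) by (simp add: wn_def w'_def add_nonneg_pos)
    ultimately show False by simp
  next
    case False
    with \<open>lam \<ge> 0\<close> have l0: "lam = 0" by simp
    define wn where "wn s = wof A c y s + w' s" for s
    have "wn r = 0"
    proof (rule key)
      show "\<forall>s. 0 \<le> wn s" using w'0 yo by (simp add: wn_def dual_optimal_def dual_feasible_wof add_nonneg_nonneg)
      show "(\<Sum>s\<in>UNIV. wn s *\<^sub>R Gf A s) = c"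
        using E1 l0 by (simp add: wn_def scaleR_add_left sum.distrib wof_sum_G)
      show "(\<Sum>s\<in>UNIV. wn s * hf b s) = c \<bullet> x"
        using E2 l0 V by (simp add: wn_def distrib_right sum.distrib wof_sum_h)
    qed
    moreover have "wn r > 0" using w2(1) wr by (simp add: wn_def w'_def add_nonneg_pos)
    ultimately show False by simp
  qed
qed


lemma phi_scale: "phi A c y (t *\<^sub>R d) = \<bar>t\<bar> * phi A c y d"
  unfolding phi_def by (simp add: abs_mult sum_distrib_left algebra_simps)

lemma phi_cont: "continuous_on UNIV (phi A c y)"
  unfolding phi_def by (intro continuous_intros)

lemma phi_bound:
  fixes A :: "real^'n::finite^'m::finite"
  assumes xo: "primal_optimal A b c x" and xu: "\<And>x'. primal_optimal A b c x' \<Longrightarrow> x' = x"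
    and yo: "dual_optimal A b c y" and yu: "\<And>y'. dual_optimal A b c y' \<Longrightarrow> y' = y"
  shows "\<exists>\<mu>>0. \<forall>d. \<mu> * norm d \<le> phi A c y d"
proof -
  have nn: "0 \<le> wof A c y r" for r using yo by (simp add: dual_optimal_def dual_feasible_wof)
  have feas: "\<forall>r. Gf A r \<bullet> x \<le> hf b r" using xo by (simp add: primal_optimal_def primal_feasible_G)
  have phi_nn: "0 \<le> phi A c y d" for d unfolding phi_def using nn by (intro sum_nonneg) simp
  have pos: "0 < phi A c y d" if "d \<noteq> 0" for d
  proof (rule ccontr)
    assume "\<not> 0 < phi A c y d"
    with phi_nn[of d] have "phi A c y d = 0" by linarith
    then have zr: "\<forall>r. wof A c y r * \<bar>Gf A r \<bullet> d\<bar> = 0"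
      unfolding phi_def using nn by (subst (asm) sum_nonneg_eq_0_iff) auto
    have zr2: "wof A c y r * (Gf A r \<bullet> d) = 0" for r using zr[rule_format, of r] by simp
    have cd: "c \<bullet> d = 0" using wof_sum_inner[of A c y d] zr2 by simp
    have ev: "eventually (\<lambda>\<delta>. Gf A r \<bullet> (x + \<delta> *\<^sub>R d) \<le> hf b r) (at_right 0)" for r
    proof (cases "0 < wof A c y r")
      case True
      then have "Gf A r \<bullet> d = 0" using zr2[of r] by simp
      then show ?thesis using feas by (simp add: inner_add_right)
    next
      case False
      then have "Gf A r \<bullet> x < hf b r" using strict_compl[OF xo xu yo yu, of r] by simp
      from slack_eventually[OF this, of "Gf A r \<bullet> d"]
      show ?thesis by (rule eventually_mono) (simp add: inner_add_right)
    qed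
    from exists_small_pos[where P="\<lambda>r \<delta>. Gf A r \<bullet> (x + \<delta> *\<^sub>R d) \<le> hf b r", OF ev]
    obtain \<delta> :: real where \<delta>: "0 < \<delta>" "\<forall>r. Gf A r \<bullet> (x + \<delta> *\<^sub>R d) \<le> hf b r" by blast
    have "primal_optimal A b c (x + \<delta> *\<^sub>R d)"
      using xo \<delta>(2) cd by (simp add: primal_optimal_def primal_feasible_G inner_add_right)
    then have "x + \<delta> *\<^sub>R d = x" by (rule xu)
    then show False using \<delta>(1) that by simp
  qed
  obtain d1 :: "real^'n" where d1: "norm d1 = 1" using vector_choose_size[of 1] by auto
  have "\<exists>d0\<in>sphere 0 1. \<forall>d\<in>sphere 0 1. phi A c y d0 \<le> phi A c y d"
    using d1 by (intro continuous_attains_inf compact_sphere continuous_on_subset[OF phi_cont]) auto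
  then obtain d0 where d0: "norm d0 = 1" "\<forall>d. norm d = 1 \<longrightarrow> phi A c y d0 \<le> phi A c y d" by auto
  have "d0 \<noteq> 0" using d0(1) by auto
  then have mu: "0 < phi A c y d0" by (rule pos)
  have "phi A c y d0 * norm d \<le> phi A c y d" for d
  proof (cases "d = 0")
    case True then show ?thesis using phi_nn by simp
  next
    case False
    then have "phi A c y d0 \<le> phi A c y ((1 / norm d) *\<^sub>R d)" using d0(2) by simp
    also have "\<dots> = phi A c y d / norm d" by (simp add: phi_scale)
    finally show ?thesis using False by (simp add: field_simps)
  qed
  then show ?thesis using mu by blast
qed


lemma compl_zero:
  assumes pf: "primal_feasible A b x" and df: "dual_feasible A c y" and eq: "y \<bullet> b \<le> c \<bullet> x"
  shows "wof A c y r * (Gf A r \<bullet> x) = wof A c y r * hf b r"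
proof -
  have nn: "\<forall>r\<in>UNIV. 0 \<le> wof A c y r * (hf b r - Gf A r \<bullet> x)"
    using pf df by (auto simp: primal_feasible_G dual_feasible_wof)
  have "(\<Sum>r\<in>UNIV. wof A c y r * (hf b r - Gf A r \<bullet> x)) = y \<bullet> b - c \<bullet> x"
    by (simp add: right_diff_distrib sum_subtractf wof_sum_h wof_sum_inner)
  also have "\<dots> \<le> 0" using eq by simp
  finally have "(\<Sum>r\<in>UNIV. wof A c y r * (hf b r - Gf A r \<bullet> x)) = 0"
    using sum_nonneg[of UNIV "\<lambda>r. wof A c y r * (hf b r - Gf A r \<bullet> x)"] nn by auto
  then have "wof A c y r * (hf b r - Gf A r \<bullet> x) = 0"
    using nn by (subst (asm) sum_nonneg_eq_0_iff) auto
  then show ?thesis by (simp add: right_diff_distrib) (metis)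
qed

lemma inner_eq_off_j:
  fixes y b1 b2 :: "real^'m::finite"
  assumes "y $ j = 0" "\<forall>k. k \<noteq> j \<longrightarrow> b1 $ k = b2 $ k"
  shows "y \<bullet> b1 = y \<bullet> b2"
  unfolding inner_vec_def using assms by (intro sum.cong) auto

lemma slice_unique:
  fixes A :: "real^'n::finite^'m::finite"
  assumes le: "b1 $ j \<le> b2 $ j" and eqo: "\<forall>k. k \<noteq> j \<longrightarrow> b1 $ k = b2 $ k"
    and y1j: "y1 $ j = 0" and y2j: "y2 $ j = 0"
    and p1: "primal_feasible A b1 x1" and d1: "dual_feasible A c y1" and v1: "y1 \<bullet> b1 \<le> c \<bullet> x1"
    and p2: "primal_feasible A b2 x2" and d2: "dual_feasible A c y2" and v2: "y2 \<bullet> b2 \<le> c \<bullet> x2"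
    and N: "\<forall>d. norm d \<le> N * phi A c y2 d"
  shows "x1 = x2"
proof -
  have p12: "primal_feasible A b2 x1"
    using p1 le eqo unfolding primal_feasible_def by (metis order_trans order_refl)
  have "c \<bullet> x1 \<le> y2 \<bullet> b2" by (rule weak_duality[OF p12 d2])
  moreover have "c \<bullet> x2 \<le> y1 \<bullet> b2" by (rule weak_duality[OF p2 d1])
  moreover have "y1 \<bullet> b1 = y1 \<bullet> b2" by (rule inner_eq_off_j[OF y1j eqo])
  ultimately have v12: "y2 \<bullet> b2 \<le> c \<bullet> x1" using v1 v2 by linarith
  have z: "wof A c y2 r * (Gf A r \<bullet> (x1 - x2)) = 0" for r
    using compl_zero[OF p12 d2 v12, of r] compl_zero[OF p2 d2 v2, of r]
    by (simp add: inner_diff_right right_diff_distrib) (metis)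
  have "phi A c y2 (x1 - x2) = 0"
  proof -
    have "wof A c y2 r * \<bar>Gf A r \<bullet> (x1 - x2)\<bar> = 0" for r
    proof -
      have "0 \<le> wof A c y2 r" using d2 by (simp add: dual_feasible_wof)
      then have "wof A c y2 r * \<bar>Gf A r \<bullet> (x1 - x2)\<bar> = \<bar>wof A c y2 r * (Gf A r \<bullet> (x1 - x2))\<bar>"
        by (simp add: abs_mult)
      then show ?thesis using z[of r] by simp
    qed
    then show ?thesis unfolding phi_def by (intro sum.neutral) blast
  qed
  then have "norm (x1 - x2) \<le> 0" using N[rule_format, of "x1 - x2"] by simp
  then show ?thesis by simp
qed

definition Av :: "real^(('m::finite,'n::finite) lp_index) \<Rightarrow> real^'n^'m" where
  "Av v = (\<chi> i j. v $ Inl (i, j))"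
definition bv :: "real^(('m::finite,'n::finite) lp_index) \<Rightarrow> real^'m" where
  "bv v = (\<chi> i. v $ Inr (Inl i))"
definition cv :: "real^(('m::finite,'n::finite) lp_index) \<Rightarrow> real^'n" where
  "cv v = (\<chi> j. v $ Inr (Inr j))"
definition vec_of :: "(('m,'n) lp_index \<Rightarrow> real) \<Rightarrow> real^(('m::finite,'n::finite) lp_index)" where
  "vec_of \<omega> = (\<chi> k. \<omega> k)"

lemma rA_vec: "rA \<omega> = Av (vec_of \<omega>)" by (simp add: rA_def Av_def vec_of_def)
lemma rb_vec: "rb \<omega> = bv (vec_of \<omega>)" by (simp add: rb_def bv_def vec_of_def)
lemma rc_vec: "rc \<omega> = cv (vec_of \<omega>)" by (simp add: rc_def cv_def vec_of_def)

definition good :: "real \<Rightarrow> 'm \<Rightarrow> real \<Rightarrow> real^(('m::finite,'n::finite) lp_index) \<Rightarrow> real^'n \<Rightarrow> real^'m \<Rightarrow> bool" where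
  "good e j N v x y \<longleftrightarrow> primal_feasible (Av v) (bv v) x \<and> dual_feasible (Av v) (cv v) y \<and>
     y \<bullet> bv v \<le> cv v \<bullet> x \<and> y $ j = 0 \<and> bv v $ j - (Av v *v x) $ j \<le> e \<and>
     (\<forall>d. norm d \<le> N * phi (Av v) (cv v) y d) \<and> norm v \<le> N \<and> norm x \<le> N \<and> norm y \<le> N"

definition Kset :: "real \<Rightarrow> 'm \<Rightarrow> real \<Rightarrow> ((real^(('m::finite,'n::finite) lp_index)) \<times> (real^'n) \<times> (real^'m)) set" where
  "Kset e j N = {z. good e j N (fst z) (fst (snd z)) (snd (snd z))}"

definition Tset :: "real \<Rightarrow> 'm \<Rightarrow> (real^(('m::finite,'n::finite) lp_index)) set" where
  "Tset e j = (\<Union>N::nat. fst ` Kset e j (real N))"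

lemma Av_mv_nth: "(Av v *v x) $ k = (\<Sum>j\<in>UNIV. v $ Inl (k, j) * x $ j)"
  by (simp add: Av_def matrix_vector_mult_def)
lemma Av_vm_nth: "(y v* Av v) $ i = (\<Sum>k\<in>UNIV. y $ k * v $ Inl (k, i))"
  by (simp add: Av_def vector_matrix_mult_def)
lemma bv_nth: "bv v $ k = v $ Inr (Inl k)" by (simp add: bv_def)
lemma cv_nth: "cv v $ k = v $ Inr (Inr k)" by (simp add: cv_def)

lemma inner_vec_real: "(x::real^'k::finite) \<bullet> y = (\<Sum>i\<in>UNIV. x $ i * y $ i)"
  by (simp add: inner_vec_def)

lemma phi_expand: "phi A c y d = (\<Sum>k\<in>UNIV. y $ k * \<bar>(A *v d) $ k\<bar>) + (\<Sum>i\<in>UNIV. ((y v* A) $ i - c $ i) * \<bar>d $ i\<bar>)"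
  unfolding phi_def by (simp add: sum_UNIV_Plus)

lemma closed_Kset: "closed (Kset e j N)"
  unfolding Kset_def good_def primal_feasible_def dual_feasible_def phi_expand Av_mv_nth Av_vm_nth
    bv_nth cv_nth inner_vec_real
  by ((intro closed_Collect_conj closed_Collect_all); (intro closed_Collect_le closed_Collect_eq);
      (intro continuous_intros))

lemma compact_Kset: "compact (Kset e j N)"
proof -
  have "Kset e j N \<subseteq> cball 0 N \<times> cball 0 N \<times> cball 0 N"
    unfolding Kset_def good_def by auto
  moreover have "compact (cball (0::real^(('m::finite,'n::finite) lp_index)) N \<times> cball (0::real^'n) N \<times> cball (0::real^'m) N)"
    by (intro compact_Times compact_cball)
  ultimately show ?thesis using closed_Kset by (metis compact_Int_closed inf.absorb_iff2)
qed

lemma Tset_borel: "Tset e j \<in> sets borel"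
proof -
  have "fst ` Kset e j (real N) \<in> sets borel" for N :: nat
    by (intro borel_closed compact_imp_closed compact_continuous_image continuous_intros compact_Kset)
  then show ?thesis unfolding Tset_def by blast
qed


lemma Tset_slice_le:
  fixes v1 v2 :: "real^(('m::finite,'n::finite) lp_index)"
  assumes T1: "v1 \<in> Tset e j" and T2: "v2 \<in> Tset e j"
    and eqo: "\<forall>k. k \<noteq> Inr (Inl j) \<longrightarrow> v1 $ k = v2 $ k"
    and le: "v1 $ Inr (Inl j) \<le> v2 $ Inr (Inl j)"
  shows "v2 $ Inr (Inl j) - v1 $ Inr (Inl j) \<le> e"
proof -
  obtain N1 x1 y1 where g1: "good e j N1 v1 x1 y1"
    using T1 unfolding Tset_def Kset_def by auto
  obtain N2 x2 y2 where g2: "good e j N2 v2 x2 y2"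
    using T2 unfolding Tset_def Kset_def by auto
  have AA: "Av v1 = Av v2" using eqo by (simp add: Av_def vec_eq_iff)
  have cc: "cv v1 = cv v2" using eqo by (simp add: cv_def vec_eq_iff)
  have bo: "\<forall>k. k \<noteq> j \<longrightarrow> bv v1 $ k = bv v2 $ k" using eqo by (simp add: bv_def)
  have bj: "bv v1 $ j \<le> bv v2 $ j" using le by (simp add: bv_def)
  have "x1 = x2"
    by (rule slice_unique[OF bj bo, of y1 y2 "Av v2" x1 "cv v2" x2 N2])
       (use g1 g2 in \<open>simp_all add: good_def AA cc\<close>)
  then show ?thesis using g1 g2 unfolding good_def primal_feasible_def AA
    by (simp add: bv_def) (smt (verit))
qed

lemma Tset_slice:
  fixes v1 v2 :: "real^(('m::finite,'n::finite) lp_index)"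
  assumes "v1 \<in> Tset e j" "v2 \<in> Tset e j"
    and "\<forall>k. k \<noteq> Inr (Inl j) \<longrightarrow> v1 $ k = v2 $ k"
  shows "\<bar>v1 $ Inr (Inl j) - v2 $ Inr (Inl j)\<bar> \<le> e"
proof (cases "v1 $ Inr (Inl j) \<le> v2 $ Inr (Inl j)")
  case True
  then show ?thesis using Tset_slice_le[OF assms True] by simp
next
  case False
  have "\<forall>k. k \<noteq> Inr (Inl j) \<longrightarrow> v2 $ k = v1 $ k" using assms(3) by simp
  from Tset_slice_le[OF assms(2,1) this] False show ?thesis by simp
qed


lemma event_in_T:
  fixes v :: "real^(('m::finite,'n::finite) lp_index)"
  assumes ux: "\<exists>!x. primal_optimal (Av v) (bv v) (cv v) x"
    and uy: "\<exists>!y. dual_optimal (Av v) (bv v) (cv v) y"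
    and bet: "betaP (Av v) (bv v) (cv v) \<le> ereal t" and te: "t \<le> \<epsilon>" and e0: "0 < \<epsilon>"
  shows "\<exists>j. v \<in> Tset (2 * \<epsilon>) j"
proof -
  define A where "A = Av v"
  define b where "b = bv v"
  define c where "c = cv v"
  define x where "x = opt_x A b c"
  define y where "y = opt_y A b c"
  have xo: "primal_optimal A b c x" unfolding x_def opt_x_def A_def b_def c_def using theI'[OF ux] .
  have xu: "\<And>x'. primal_optimal A b c x' \<Longrightarrow> x' = x" using ux xo unfolding A_def b_def c_def by blast
  have yo: "dual_optimal A b c y" unfolding y_def opt_y_def A_def b_def c_def using theI'[OF uy] .
  have yu: "\<And>y'. dual_optimal A b c y' \<Longrightarrow> y' = y" using uy yo unfolding A_def b_def c_def by blast
  have "t < 2 * \<epsilon>" using te e0 by simp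
  then have "ereal t < ereal (2 * \<epsilon>)" by simp
  then have "betaP A b c < ereal (2 * \<epsilon>)" using bet unfolding A_def b_def c_def
    by (rule le_less_trans[rotated])
  then obtain j where j: "y $ j = 0" "b $ j - (A *v x) $ j < 2 * \<epsilon>"
    unfolding betaP_def INF_less_iff x_def y_def by auto
  obtain \<mu> where mu: "0 < \<mu>" "\<forall>d. \<mu> * norm d \<le> phi A c y d" using phi_bound[OF xo xu yo yu] by blast
  have V: "y \<bullet> b = c \<bullet> x" by (rule lp_duality_value[OF xo yo])
  obtain N :: nat where N: "max (max (1 / \<mu>) (norm v)) (max (norm x) (norm y)) \<le> real N"
    using real_arch_simple by blast
  have "norm d \<le> real N * phi A c y d" for d
  proof -
    have p: "\<mu> * norm d \<le> phi A c y d" using mu by blast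
    then have "0 \<le> phi A c y d" using mu(1) by (smt (verit) mult_nonneg_nonneg norm_ge_zero)
    have "norm d \<le> phi A c y d / \<mu>" using p mu(1) by (simp add: field_simps)
    also have "\<dots> = (1 / \<mu>) * phi A c y d" by simp
    also have "\<dots> \<le> real N * phi A c y d"
      using N \<open>0 \<le> phi A c y d\<close> by (intro mult_right_mono) auto
    finally show ?thesis .
  qed
  moreover have "primal_feasible A b x" using xo by (simp add: primal_optimal_def)
  moreover have "dual_feasible A c y" using yo by (simp add: dual_optimal_def)
  moreover have "norm v \<le> real N" "norm x \<le> real N" "norm y \<le> real N" using N by auto
  ultimately have "good (2 * \<epsilon>) j (real N) v x y"
    using j V unfolding good_def A_def b_def c_def by auto
  then have "v \<in> fst ` Kset (2 * \<epsilon>) j (real N)" unfolding Kset_def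
    by (intro image_eqI[of _ _ "(v, (x, y))"]) auto
  then show ?thesis unfolding Tset_def by blast
qed


lemma vec_of_meas: "vec_of \<in> borel_measurable (gauss_perturb A b c \<sigma>)"
proof -
  have "(\<lambda>\<omega>. vec_of \<omega> \<bullet> i) \<in> borel_measurable (gauss_perturb A b c \<sigma>)" if "i \<in> Basis" for i
  proof -
    from that obtain k where i: "i = axis k 1" by (auto simp: Basis_vec_def)
    have "(\<lambda>\<omega>. vec_of \<omega> \<bullet> i) = (\<lambda>\<omega>. \<omega> k)"
      by (rule ext) (simp add: i vec_of_def cart_eq_inner_axis[symmetric])
    moreover have "(\<lambda>\<omega>. \<omega> k) \<in> borel_measurable (gauss_perturb A b c \<sigma>)"
      unfolding gauss_perturb_def by measurable
    ultimately show ?thesis by simp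
  qed
  then show ?thesis by (subst borel_measurable_euclidean_space) blast
qed

lemma space_gp: "space (gauss_perturb A b c \<sigma>) = UNIV"
  unfolding gauss_perturb_def by (simp add: space_PiM)

lemma normal_density_le: 
  assumes "0 < \<sigma>" "\<sigma> \<le> 1"
  shows "normal_density \<mu> \<sigma> x \<le> 1 / \<sigma>"
proof -
  have ex: "exp (- (x - \<mu>)\<^sup>2 / (2 * \<sigma>\<^sup>2)) \<le> 1" using assms by simp
  have sq: "\<sigma> \<le> sqrt (2 * pi * \<sigma>\<^sup>2)"
  proof -
    have "sqrt (2 * pi * \<sigma>\<^sup>2) = sqrt (2 * pi) * \<sigma>" using assms by (simp add: real_sqrt_mult)
    moreover have "1 \<le> sqrt (2 * pi)" using pi_gt3 by simp
    ultimately show ?thesis using assms by simp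
  qed
  have "normal_density \<mu> \<sigma> x \<le> 1 / sqrt (2 * pi * \<sigma>\<^sup>2) * 1"
    unfolding normal_density_def using ex by (intro mult_left_mono) auto
  also have "\<dots> \<le> 1 / \<sigma>" using sq assms by (simp add: frac_le)
  finally show ?thesis .
qed

lemma S_bound:
  fixes A :: "real^'n::finite^'m::finite"
  assumes s0: "0 < \<sigma>" and s1: "\<sigma> \<le> 1" and e0: "0 \<le> e"
  shows "emeasure (gauss_perturb A b c \<sigma>) (vec_of -` Tset e j) \<le> ennreal (2 * e / \<sigma>)"
proof -
  define Mk where "Mk = (\<lambda>k. density lborel (\<lambda>x. ennreal (normal_density (lp_mean A b c k) \<sigma> x)))"
  define M where "M = gauss_perturb A b c \<sigma>"
  define S :: "(('m,'n) lp_index \<Rightarrow> real) set" where "S = vec_of -` Tset e j"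
  define k0 :: "('m,'n) lp_index" where "k0 = Inr (Inl j)"
  define I where "I = UNIV - {k0}"
  have MM: "M = PiM (insert k0 I) Mk" by (simp add: M_def gauss_perturb_def Mk_def I_def insert_absorb)
  have pk: "prob_space (Mk k)" for k unfolding Mk_def using s0 by (simp add: prob_space_normal_density)
  interpret product_sigma_finite Mk
    unfolding product_sigma_finite_def using pk prob_space_imp_sigma_finite by blast
  have Sm: "S \<in> sets M"
  proof -
    have "vec_of -` Tset e j \<inter> space M \<in> sets M"
      unfolding M_def by (rule measurable_sets[OF vec_of_meas Tset_borel])
    then show ?thesis by (simp add: S_def M_def space_gp)
  qed
  have inner: "(\<integral>\<^sup>+ y. indicator S (x(k0 := y)) \<partial>Mk k0) \<le> ennreal (2 * e / \<sigma>)" for x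
  proof -
    obtain a where a: "\<forall>y. x(k0 := y) \<in> S \<longrightarrow> y \<in> {a - e .. a + e}"
    proof (cases "\<exists>y0. x(k0 := y0) \<in> S")
      case True
      then obtain y0 where y0: "x(k0 := y0) \<in> S" by blast
      have "y \<in> {y0 - e .. y0 + e}" if "x(k0 := y) \<in> S" for y
      proof -
        have "\<bar>vec_of (x(k0 := y)) $ Inr (Inl j) - vec_of (x(k0 := y0)) $ Inr (Inl j)\<bar> \<le> e"
          using that y0 unfolding S_def
          by (intro Tset_slice) (auto simp: vec_of_def k0_def)
        then show ?thesis by (simp add: vec_of_def k0_def abs_le_iff)
      qed
      then show ?thesis using that by blast
    next
      case False
      then show ?thesis using that by blast
    qed
    have "(\<integral>\<^sup>+ y. indicator S (x(k0 := y)) \<partial>Mk k0) \<le> (\<integral>\<^sup>+ y. indicator {a - e .. a + e} y \<partial>Mk k0)"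
      using a by (intro nn_integral_mono) (auto simp: indicator_def)
    also have "\<dots> = emeasure (Mk k0) {a - e .. a + e}"
      by (rule nn_integral_indicator) (simp add: Mk_def)
    also have "\<dots> = (\<integral>\<^sup>+ y. ennreal (normal_density (lp_mean A b c k0) \<sigma> y) * indicator {a - e .. a + e} y \<partial>lborel)"
      unfolding Mk_def by (rule emeasure_density) auto
    also have "\<dots> \<le> (\<integral>\<^sup>+ y. ennreal (1 / \<sigma>) * indicator {a - e .. a + e} y \<partial>lborel)"
      using normal_density_le[OF s0 s1]
      by (intro nn_integral_mono) (auto simp: indicator_def intro: ennreal_leI)
    also have "\<dots> = ennreal (1 / \<sigma>) * emeasure lborel {a - e .. a + e}"
      by (rule nn_integral_cmult_indicator) simp
    also have "\<dots> = ennreal (2 * e / \<sigma>)"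
      using e0 s0 by (simp add: ennreal_mult'[symmetric])
    finally show ?thesis .
  qed
  have "emeasure M S = (\<integral>\<^sup>+ \<omega>. indicator S \<omega> \<partial>M)"
    by (rule nn_integral_indicator[symmetric, OF Sm])
  also have "\<dots> = (\<integral>\<^sup>+ x. (\<integral>\<^sup>+ y. indicator S (x(k0 := y)) \<partial>Mk k0) \<partial>PiM I Mk)"
    unfolding MM
    by (rule product_nn_integral_insert) (use Sm MM in \<open>auto simp: I_def\<close>)
  also have "\<dots> \<le> (\<integral>\<^sup>+ x. ennreal (2 * e / \<sigma>) \<partial>PiM I Mk)"
    by (intro nn_integral_mono inner)
  also have "\<dots> = ennreal (2 * e / \<sigma>)"
  proof -
    have "prob_space (PiM I Mk)" by (intro prob_space_PiM pk)
    then show ?thesis by (simp add: prob_space.emeasure_space_1)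
  qed
  finally show ?thesis unfolding M_def S_def .
qed

lemma prob_gp: "0 < \<sigma> \<Longrightarrow> prob_space (gauss_perturb A b c \<sigma>)"
  unfolding gauss_perturb_def by (intro prob_space_PiM prob_space_normal_density)

theorem mainTheorem6:
  fixes Abar :: "real^'n::finite^'m::finite" and bbar :: "real^'m" and cbar :: "real^'n"
    and \<sigma> \<epsilon> :: real
  assumes "CARD('n) \<le> CARD('m)"
    and "spec_norm Abar \<le> 1" and "norm bbar \<le> 1" and "norm cbar \<le> 1"
    and "0 < \<sigma>" and "\<sigma>\<^sup>2 \<le> 1"
    and "0 < \<epsilon>"
  shows "\<exists>S \<in> sets (gauss_perturb Abar bbar cbar \<sigma>).
     {\<omega> \<in> space (gauss_perturb Abar bbar cbar \<sigma>).
        lp_feasible_bounded (rA \<omega>) (rb \<omega>) (rc \<omega>) \<and>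
        (\<exists>!x. primal_optimal (rA \<omega>) (rb \<omega>) (rc \<omega>) x) \<and>
        (\<exists>!y. dual_optimal (rA \<omega>) (rb \<omega>) (rc \<omega>) y) \<and>
        betaP (rA \<omega>) (rb \<omega>) (rc \<omega>) \<le>
          ereal (\<epsilon> / max 1 (spec_norm (rA \<omega>) * norm (opt_x (rA \<omega>) (rb \<omega>) (rc \<omega>))))}
       \<subseteq> S \<and>
     measure (gauss_perturb Abar bbar cbar \<sigma>) S \<le> 4 * \<epsilon> * real CARD('m) / \<sigma>\<^sup>2"
proof -
  define M where "M = gauss_perturb Abar bbar cbar \<sigma>"
  define Sj :: "'m \<Rightarrow> (('m,'n) lp_index \<Rightarrow> real) set" where "Sj j = vec_of -` Tset (2 * \<epsilon>) j" for j
  define S where "S = (\<Union>j. Sj j)"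
  have s0: "0 < \<sigma>" and e0: "0 < \<epsilon>" using assms by auto
  have s1: "\<sigma> \<le> 1"
  proof (rule ccontr)
    assume "\<not> \<sigma> \<le> 1"
    then have "1 < \<sigma>" by simp
    then have "1 * 1 < \<sigma> * \<sigma>" by (intro mult_strict_mono) auto
    with assms(6) show False by (simp add: power2_eq_square)
  qed
  interpret P: prob_space M unfolding M_def using s0 by (rule prob_gp)
  have Sjm: "Sj j \<in> sets M" for j
  proof -
    have "vec_of -` Tset (2 * \<epsilon>) j \<inter> space M \<in> sets M"
      unfolding M_def by (rule measurable_sets[OF vec_of_meas Tset_borel])
    then show ?thesis by (simp add: Sj_def M_def space_gp)
  qed
  have Sm: "S \<in> sets M" unfolding S_def using Sjm by auto
  have Sjb: "measure M (Sj j) \<le> 4 * \<epsilon> / \<sigma>" for j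
  proof -
    have "emeasure M (Sj j) \<le> ennreal (2 * (2 * \<epsilon>) / \<sigma>)"
      unfolding M_def Sj_def using S_bound[OF s0 s1, of "2 * \<epsilon>" Abar bbar cbar j] e0 by simp
    then have "ennreal (measure M (Sj j)) \<le> ennreal (4 * \<epsilon> / \<sigma>)"
      by (simp add: P.emeasure_eq_measure)
    then show ?thesis using e0 s0 by (simp add: ennreal_le_iff)
  qed
  have incl: "{\<omega> \<in> space M.
        lp_feasible_bounded (rA \<omega>) (rb \<omega>) (rc \<omega>) \<and>
        (\<exists>!x. primal_optimal (rA \<omega>) (rb \<omega>) (rc \<omega>) x) \<and>
        (\<exists>!y. dual_optimal (rA \<omega>) (rb \<omega>) (rc \<omega>) y) \<and>
        betaP (rA \<omega>) (rb \<omega>) (rc \<omega>) \<le>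
          ereal (\<epsilon> / max 1 (spec_norm (rA \<omega>) * norm (opt_x (rA \<omega>) (rb \<omega>) (rc \<omega>))))} \<subseteq> S"
  proof (intro subsetI)
    fix \<omega> assume "\<omega> \<in> {\<omega> \<in> space M.
        lp_feasible_bounded (rA \<omega>) (rb \<omega>) (rc \<omega>) \<and>
        (\<exists>!x. primal_optimal (rA \<omega>) (rb \<omega>) (rc \<omega>) x) \<and>
        (\<exists>!y. dual_optimal (rA \<omega>) (rb \<omega>) (rc \<omega>) y) \<and>
        betaP (rA \<omega>) (rb \<omega>) (rc \<omega>) \<le>
          ereal (\<epsilon> / max 1 (spec_norm (rA \<omega>) * norm (opt_x (rA \<omega>) (rb \<omega>) (rc \<omega>))))}"
    then have H: "\<exists>!x. primal_optimal (Av (vec_of \<omega>)) (bv (vec_of \<omega>)) (cv (vec_of \<omega>)) x"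
        "\<exists>!y. dual_optimal (Av (vec_of \<omega>)) (bv (vec_of \<omega>)) (cv (vec_of \<omega>)) y"
        "betaP (Av (vec_of \<omega>)) (bv (vec_of \<omega>)) (cv (vec_of \<omega>)) \<le>
          ereal (\<epsilon> / max 1 (spec_norm (rA \<omega>) * norm (opt_x (rA \<omega>) (rb \<omega>) (rc \<omega>))))"
      by (simp_all add: rA_vec rb_vec rc_vec)
    have "\<epsilon> / max 1 (spec_norm (rA \<omega>) * norm (opt_x (rA \<omega>) (rb \<omega>) (rc \<omega>))) \<le> \<epsilon>"
      using e0 by (simp add: divide_le_eq mult_le_cancel_left1)
    from event_in_T[OF H this e0] obtain j where "vec_of \<omega> \<in> Tset (2 * \<epsilon>) j" by blast
    then show "\<omega> \<in> S" unfolding S_def Sj_def by blast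
  qed
  have "measure M S \<le> (\<Sum>j\<in>UNIV. measure M (Sj j))"
    unfolding S_def using Sjm by (intro measure_UNION_le) auto
  also have "\<dots> \<le> (\<Sum>j\<in>(UNIV::'m set). 4 * \<epsilon> / \<sigma>)" by (intro sum_mono Sjb)
  also have "\<dots> = 4 * \<epsilon> * real CARD('m) / \<sigma>" by simp
  also have "\<dots> \<le> 4 * \<epsilon> * real CARD('m) / \<sigma>\<^sup>2"
  proof -
    have "\<sigma>\<^sup>2 \<le> \<sigma>" using s0 s1 by (simp add: power2_eq_square mult_le_cancel_right1)
    moreover have "0 \<le> 4 * \<epsilon> * real CARD('m)" using e0 by simp
    moreover have "0 < \<sigma> * \<sigma>\<^sup>2" using s0 by simp
    ultimately show ?thesis by (rule divide_left_mono)
  qed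
  finally show ?thesis using incl Sm unfolding M_def by blast
qed

end
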